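(* Let $a\in\mathbb{N}$ and $b\neq d\in\mathbb{Z}$ with $a\mid\mathrm{lcm}(b,d)$. Then $\omega(G_{a,b,a,d})=\infty$, i.e. $G_{a,b,a,d}$ contains cliques of every finite size.
   Context: $\mathbb{N}=\{1,2,\dots\}$; convention $\mathrm{lcm}(b,0)=0$. For $a,c\in\mathbb{N}$, $b,d\in\mathbb{Z}$, $R_{a,b,c,d} := \left\{ \frac{an+b}{cn+d} : n \in \mathbb{N} \right\} \cap (\mathbb{Q}_{>0}\setminus\{1\})$; $G_{a,b,c,d}$ is the graph with vertex set $\mathbb{N}$ and edge set $\{\{m,n\}: m/n\in R_{a,b,c,d}\}$. $\omega$ denotes clique number. *)

theory Defs
  imports Main "HOL.Rat"
begin

text \<open>R_{a,b,c,d}: the set of values (an+b)/(cn+d) for n in N = {1,2,...},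
  intersected with the positive rationals other than 1. Division by zero yields 0
  in Isabelle, which is excluded by positivity, matching the paper.\<close>
definition R_set :: "nat \<Rightarrow> int \<Rightarrow> nat \<Rightarrow> int \<Rightarrow> rat set" where
  "R_set a b c d =
     {q. \<exists>n::nat. n \<ge> 1 \<and> q = of_int (int a * int n + b) / of_int (int c * int n + d)}
     \<inter> {q. q > 0 \<and> q \<noteq> 1}"

definition G_adj :: "nat \<Rightarrow> int \<Rightarrow> nat \<Rightarrow> int \<Rightarrow> nat \<Rightarrow> nat \<Rightarrow> bool" where
  "G_adj a b c d m n \<longleftrightarrow> m \<ge> 1 \<and> n \<ge> 1 \<and>
     (of_nat m / of_nat n \<in> R_set a b c d \<or> of_nat n / of_nat m \<in> R_set a b c d)"

definition is_clique :: "nat \<Rightarrow> int \<Rightarrow> nat \<Rightarrow> int \<Rightarrow> nat set \<Rightarrow> bool" where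
  "is_clique a b c d S \<longleftrightarrow> (\<forall>m\<in>S. m \<ge> 1) \<and>
     (\<forall>m\<in>S. \<forall>n\<in>S. m \<noteq> n \<longrightarrow> G_adj a b c d m n)"

end

theory Submission
  imports Defs "HOL-Computational_Algebra.Primes" "HOL-Number_Theory.Number_Theory"
begin


lemma mult_lcm_nat:
  fixes x y p :: nat
  assumes "x \<noteq> 0" "y \<noteq> 0" "prime p"
  shows "multiplicity p (lcm x y) = max (multiplicity p x) (multiplicity p y)"
proof -
  have "count (prime_factorization (lcm x y)) p = count (prime_factorization x \<union># prime_factorization y) p"
    using prime_factorization_lcm[OF assms(1,2)] by simp
  thus ?thesis using assms(3) by (simp add: count_prime_factorization_prime)
qed

lemma coprime_split:
  fixes a x y :: nat
  assumes "a > 0" "a dvd lcm x y"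
  shows "\<exists>m1 m2. m1 > 0 \<and> m2 > 0 \<and> coprime m1 m2 \<and> m1 dvd x \<and> m2 dvd y \<and> a dvd m1 * m2"
proof (cases "x = 0 \<or> y = 0")
  case True
  then show ?thesis
  proof
    assume "x = 0" thus ?thesis using assms(1) by (intro exI[of _ a] exI[of _ 1]) auto
  next
    assume "y = 0" thus ?thesis using assms(1) by (intro exI[of _ 1] exI[of _ a]) auto
  qed
next
  case False
  hence x0: "x \<noteq> 0" and y0: "y \<noteq> 0" by auto
  define A where "A = {p \<in> prime_factors a. multiplicity p a \<le> multiplicity p x}"
  define B where "B = prime_factors a - A"
  define m1 where "m1 = (\<Prod>p\<in>A. p ^ multiplicity p a)"
  define m2 where "m2 = (\<Prod>p\<in>B. p ^ multiplicity p a)"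
  have finA: "finite A" and finB: "finite B" unfolding A_def B_def by auto
  have pA: "\<And>p. p \<in> A \<Longrightarrow> prime p" and pB: "\<And>p. p \<in> B \<Longrightarrow> prime p"
    unfolding A_def B_def by auto
  have "m1 * m2 = (\<Prod>p\<in>prime_factors a. p ^ multiplicity p a)"
    unfolding m1_def m2_def
    by (subst prod.union_disjoint[symmetric]) (auto simp: A_def B_def intro!: prod.cong)
  also have "\<dots> = a" using assms(1) by (simp add: prod_prime_factors)
  finally have prod: "m1 * m2 = a" .
  have cop: "coprime m1 m2"
    unfolding m1_def m2_def
  proof (intro prod_coprime_left prod_coprime_right)
    fix p q assume "p \<in> A" "q \<in> B"
    hence "prime p" "prime q" "p \<noteq> q" using pA pB B_def by auto
    thus "coprime (p ^ multiplicity p a) (q ^ multiplicity q a)"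
      by (simp add: primes_coprime)
  qed
  have m1x: "m1 dvd x"
  proof (rule multiplicity_le_imp_dvd)
    show "m1 \<noteq> 0" unfolding m1_def using pA finA by (auto simp: prime_gt_0_nat)
    fix q :: nat assume q: "prime q"
    have "multiplicity q m1 = (if q \<in> A then multiplicity q a else 0)"
      unfolding m1_def by (rule multiplicity_prod_prime_powers[OF finA pA q])
    thus "multiplicity q m1 \<le> multiplicity q x" by (auto simp: A_def)
  qed
  have m2y: "m2 dvd y"
  proof (rule multiplicity_le_imp_dvd)
    show "m2 \<noteq> 0" unfolding m2_def using pB finB by (auto simp: prime_gt_0_nat)
    fix q :: nat assume q: "prime q"
    have e: "multiplicity q m2 = (if q \<in> B then multiplicity q a else 0)"
      unfolding m2_def by (rule multiplicity_prod_prime_powers[OF finB pB q])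
    show "multiplicity q m2 \<le> multiplicity q y"
    proof (cases "q \<in> B")
      case True
      have "multiplicity q a \<le> multiplicity q (lcm x y)"
        using assms(2) x0 y0 by (intro dvd_imp_multiplicity_le) (auto simp: lcm_eq_0_iff)
      also have "\<dots> = max (multiplicity q x) (multiplicity q y)" using mult_lcm_nat x0 y0 q by blast
      finally show ?thesis using True e by (auto simp: B_def A_def q)
    qed (simp add: e)
  qed
  have "m1 > 0" "m2 > 0" using prod assms(1) by auto
  thus ?thesis using cop m1x m2y prod by (intro exI[of _ m1] exI[of _ m2]) simp
qed



definition Inv :: "nat \<Rightarrow> nat \<Rightarrow> nat set \<Rightarrow> nat \<Rightarrow> nat \<Rightarrow> bool" where
 "Inv m1 m2 T \<gamma> c \<longleftrightarrow> finite T \<and> T \<noteq> {} \<and>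
   (\<forall>t\<in>T. 0 < t \<and> m2^\<gamma> dvd t \<and> coprime (t div m2^\<gamma>) m2 \<and> [t = c] (mod m2^Suc \<gamma>)) \<and>
   (\<forall>t\<in>T. \<forall>t'\<in>T. t < t' \<longrightarrow> (\<exists>g h. t' - t = m2^g * h \<and> coprime h m2 \<and> m1*h dvd t \<and> h dvd t'
        \<and> [t' = c] (mod m2^Suc g)))"

lemma Inv_base:
  assumes "m2 > 0"
  shows "Inv m1 m2 {m2^\<gamma>} \<gamma> (m2^\<gamma>)"
  using assms unfolding Inv_def by auto

lemma Inv_step:
  assumes cop: "coprime m1 m2" and m1: "m1 > 0" and m2: "m2 > 0"
    and I: "Inv m1 m2 T (Suc \<gamma>) c"
  shows "\<exists>T' c'. Inv m1 m2 T' \<gamma> c' \<and> card T' = Suc (card T)"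
proof -
  define M where "M = m2 ^ Suc \<gamma>"
  define f where "f t = t div M" for t
  define Pi where "Pi = m1 * (\<Prod>t\<in>T. f t)"
  define P where "P = m2^\<gamma> * Pi"
  define T' where "T' = insert P ((+) P ` T)"
  have fin: "finite T" and ne: "T \<noteq> {}" using I unfolding Inv_def by auto
  have tpos: "\<And>t. t \<in> T \<Longrightarrow> 0 < t" using I unfolding Inv_def by auto
  have tdvd: "\<And>t. t \<in> T \<Longrightarrow> M dvd t" using I unfolding Inv_def M_def by auto
  have tcop: "\<And>t. t \<in> T \<Longrightarrow> coprime (f t) m2" using I unfolding Inv_def M_def f_def by auto
  have tcong: "\<And>t. t \<in> T \<Longrightarrow> [t = c] (mod m2 * M)" using I unfolding Inv_def M_def by auto
  have tpair: "\<And>t t'. t \<in> T \<Longrightarrow> t' \<in> T \<Longrightarrow> t < t' \<Longrightarrow> (\<exists>g h. t' - t = m2^g * h \<and> coprime h m2 \<and> m1*h dvd t \<and> h dvd t'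
        \<and> [t' = c] (mod m2^Suc g))" using I unfolding Inv_def by auto
  have teq: "\<And>t. t \<in> T \<Longrightarrow> t = M * f t" using tdvd unfolding f_def by auto
  have fpos: "\<And>t. t \<in> T \<Longrightarrow> 0 < f t" using tpos teq by (metis gr0I mult_0_right)
  have Mpos: "M > 0" using m2 unfolding M_def by simp
  have fdvd: "\<And>t. t \<in> T \<Longrightarrow> m1 * f t dvd Pi" unfolding Pi_def using fin by (simp add: dvd_prodI)
  have Picop: "coprime Pi m2" unfolding Pi_def using cop tcop
    by (simp add: prod_coprime_left)
  have Pipos: "Pi > 0" unfolding Pi_def using m1 fpos fin by simp
  have Ppos: "P > 0" unfolding P_def using Pipos m2 by simp
  have cdvd: "M dvd c"
  proof -
    obtain t0 where t0: "t0 \<in> T" using ne by auto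
    have "[t0 = c] (mod M)" using tcong[OF t0] by (metis cong_dvd_modulus_nat dvd_triv_right)
    thus ?thesis using tdvd[OF t0] by (metis cong_dvd_iff)
  qed
  have Pdvd: "\<And>t h. t \<in> T \<Longrightarrow> coprime h m2 \<Longrightarrow> h dvd t \<Longrightarrow> m1 * h dvd P"
  proof -
    fix t h assume t: "t \<in> T" and hc: "coprime h m2" and ht: "h dvd t"
    have "coprime h M" using hc unfolding M_def by simp
    hence "h dvd f t" using ht teq[OF t] by (metis coprime_dvd_mult_right_iff)
    hence "m1 * h dvd m1 * f t" by simp
    also have "\<dots> dvd Pi" using fdvd[OF t] .
    also have "\<dots> dvd P" unfolding P_def by simp
    finally show "m1 * h dvd P" .
  qed
  have Mm: "M = m2^\<gamma> * m2" unfolding M_def by simp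
  define c' where "c' = P + c"
  have inv1: "\<forall>t\<in>T'. 0 < t \<and> m2^\<gamma> dvd t \<and> coprime (t div m2^\<gamma>) m2 \<and> [t = c'] (mod m2^Suc \<gamma>)"
  proof
    fix t assume "t \<in> T'"
    then consider "t = P" | s where "s \<in> T" "t = P + s" unfolding T'_def by auto
    thus "0 < t \<and> m2^\<gamma> dvd t \<and> coprime (t div m2^\<gamma>) m2 \<and> [t = c'] (mod m2^Suc \<gamma>)"
    proof cases
      case 1
      have "P div m2^\<gamma> = Pi" unfolding P_def using m2 by simp
      moreover have "[P = c'] (mod m2^Suc \<gamma>)" unfolding c'_def
        using cdvd unfolding M_def by (auto elim!: dvdE simp: cong_def)
      moreover have "m2^\<gamma> dvd P" unfolding P_def by simp
      ultimately show ?thesis using 1 Ppos Picop by simp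
    next
      case (2 s)
      have seq: "s = m2^\<gamma> * (m2 * f s)" using teq[OF 2(1)] Mm by simp
      have "t = m2^\<gamma> * Pi + m2^\<gamma> * (m2 * f s)" using 2(2) seq unfolding P_def by simp
      hence "t = m2^\<gamma> * (Pi + m2 * f s)" by (simp only: distrib_left)
      hence tdiv: "t div m2^\<gamma> = Pi + m2 * f s" using m2 by (simp only: nonzero_mult_div_cancel_left power_not_zero) simp
      have "gcd m2 (f s * m2 + Pi) = gcd m2 Pi" by (rule gcd_add_mult)
      moreover have "gcd m2 Pi = 1" using Picop by (metis coprime_commute coprime_iff_gcd_eq_1)
      ultimately have cp: "coprime m2 (f s * m2 + Pi)" by (simp only: coprime_iff_gcd_eq_1)
      have "coprime (Pi + m2 * f s) m2" using cp by (metis add.commute mult.commute coprime_commute)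
      moreover have "[t = c'] (mod m2^Suc \<gamma>)"
      proof -
        have "[s = c] (mod M)" using tcong[OF 2(1)] by (metis cong_dvd_modulus_nat dvd_triv_right)
        thus ?thesis unfolding c'_def 2(2) M_def by (simp add: cong_add_lcancel_nat)
      qed
      moreover have "m2^\<gamma> dvd t" using \<open>t = m2 ^ \<gamma> * (Pi + m2 * f s)\<close> by simp
      moreover have "0 < t" using 2(2) Ppos by simp
      ultimately show ?thesis using tdiv by simp
    qed
  qed
  have inv2: "\<forall>t\<in>T'. \<forall>t'\<in>T'. t < t' \<longrightarrow> (\<exists>g h. t' - t = m2^g * h \<and> coprime h m2 \<and> m1*h dvd t \<and> h dvd t'
        \<and> [t' = c'] (mod m2^Suc g))"
  proof (intro ballI impI)
    fix t t' assume tT: "t \<in> T'" and tT': "t' \<in> T'" and lt: "t < t'"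
    consider "t = P" "t' = P" | s where "s \<in> T" "t = P" "t' = P + s" | s where "s \<in> T" "t = P + s" "t' = P"
      | s s' where "s \<in> T" "s' \<in> T" "t = P + s" "t' = P + s'"
      using tT tT' unfolding T'_def by auto
    thus "\<exists>g h. t' - t = m2^g * h \<and> coprime h m2 \<and> m1*h dvd t \<and> h dvd t' \<and> [t' = c'] (mod m2^Suc g)"
    proof cases
      case 1 thus ?thesis using lt by simp
    next
      case (2 s)
      have "t' - t = m2^(Suc \<gamma>) * f s" using 2 teq[OF 2(1)] M_def by simp
      moreover have "coprime (f s) m2" using tcop[OF 2(1)] .
      moreover have "m1 * f s dvd t" using 2(2) fdvd[OF 2(1)] unfolding P_def by (simp add: dvd_mult)
      moreover have "f s dvd t'"
      proof -
        have "f s dvd P" using fdvd[OF 2(1)] unfolding P_def by (meson dvd_mult dvd_mult_right)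
        moreover have "f s dvd s" using teq[OF 2(1)] by (metis dvd_triv_right)
        ultimately show ?thesis using 2(3) by simp
      qed
      moreover have "[t' = c'] (mod m2^Suc (Suc \<gamma>))"
        using tcong[OF 2(1)] unfolding 2(3) c'_def M_def by (simp add: cong_add_lcancel_nat)
      ultimately show ?thesis by blast
    next
      case (3 s) thus ?thesis using lt by simp
    next
      case (4 s s')
      have "s < s'" using 4 lt by simp
      then obtain g h where gh: "s' - s = m2^g * h" "coprime h m2" "m1*h dvd s" "h dvd s'" "[s' = c] (mod m2^Suc g)"
        using tpair[OF 4(1,2)] by blast
      have hs: "h dvd s" using gh(3) by (meson dvd_mult_right)
      have mhP: "m1 * h dvd P" using Pdvd[OF 4(1) gh(2) hs] .
      have "t' - t = m2^g * h" using 4 gh(1) by simp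
      moreover have "m1 * h dvd t" using 4(3) mhP gh(3) by simp
      moreover have "h dvd t'" using 4(4) mhP gh(4) by (meson dvd_add dvd_mult_right)
      moreover have "[t' = c'] (mod m2^Suc g)" using gh(5) unfolding 4(4) c'_def by (simp add: cong_add_lcancel_nat)
      ultimately show ?thesis using gh(2) by blast
    qed
  qed
  have notin: "P \<notin> (+) P ` T"
  proof
    assume "P \<in> (+) P ` T"
    then obtain s where "s \<in> T" "P = P + s" by blast
    thus False using tpos[of s] by simp
  qed
  have "card T' = Suc (card T)" unfolding T'_def using notin fin
    by (simp add: card_image)
  moreover have "finite T'" "T' \<noteq> {}" unfolding T'_def using fin by auto
  moreover have "Inv m1 m2 T' \<gamma> c'" unfolding Inv_def using inv1 inv2 calculation(2,3) by blast
  ultimately show ?thesis by blast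
qed

lemma Inv_exists:
  assumes cop: "coprime m1 m2" and m1: "m1 > 0" and m2: "m2 > 0"
  shows "\<exists>T c. Inv m1 m2 T \<gamma> c \<and> card T = Suc j"
proof (induction j arbitrary: \<gamma>)
  case 0
  show ?case using Inv_base[OF m2, of m1 \<gamma>] by (intro exI[of _ "{m2^\<gamma>}"]) auto
next
  case (Suc j)
  obtain T c where "Inv m1 m2 T (Suc \<gamma>) c" "card T = Suc j" using Suc.IH by blast
  thus ?case using Inv_step[OF cop m1 m2] by metis
qed



lemma Inv_N:
  assumes cop: "coprime m1 m2" and m1: "m1 > 0" and m2: "m2 > 0"
    and I: "Inv m1 m2 T \<gamma> c"
  shows "\<exists>N\<ge>B. \<forall>t\<in>T. \<forall>t'\<in>T. t < t' \<longrightarrow> m1*(t'-t) dvd N + t \<and> m2*(t'-t) dvd N + t'"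
proof -
  define f where "f t = t div m2^\<gamma>" for t
  define H where "H = m1 * (\<Prod>t\<in>T. f t)"
  define E where "E = (\<Sum>t\<in>T. t)"
  define M where "M = m2 ^ E"
  have fin: "finite T" using I unfolding Inv_def by auto
  have tpos: "\<And>t. t \<in> T \<Longrightarrow> 0 < t" using I unfolding Inv_def by auto
  have tdvd: "\<And>t. t \<in> T \<Longrightarrow> m2^\<gamma> dvd t" using I unfolding Inv_def by auto
  have tcop: "\<And>t. t \<in> T \<Longrightarrow> coprime (f t) m2" using I unfolding Inv_def f_def by auto
  have tpair: "\<And>t t'. t \<in> T \<Longrightarrow> t' \<in> T \<Longrightarrow> t < t' \<Longrightarrow> (\<exists>g h. t' - t = m2^g * h \<and> coprime h m2 \<and> m1*h dvd t \<and> h dvd t'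
        \<and> [t' = c] (mod m2^Suc g))" using I unfolding Inv_def by auto
  have teq: "\<And>t. t \<in> T \<Longrightarrow> t = m2^\<gamma> * f t" using tdvd unfolding f_def by auto
  have Hcop: "coprime H M" unfolding H_def M_def using cop tcop
    by (simp add: prod_coprime_left)
  have Mpos: "M > 0" unfolding M_def using m2 by simp
  obtain x where x1: "[x = 0] (mod H)" and x2: "[x = M - c mod M] (mod M)"
    using binary_chinese_remainder_nat[OF Hcop] by blast
  define N where "N = x + B * H * M"
  have HN: "H dvd N" using x1 unfolding N_def by (simp add: cong_0_iff)
  have MN: "M dvd N + c"
  proof -
    have "[N = M - c mod M] (mod M)" using x2 unfolding N_def by (simp add: cong_def)
    hence "[N + c = (M - c mod M) + c] (mod M)" by (rule cong_add_rcancel_nat[THEN iffD2])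
    moreover have "(M - c mod M) + c = M * (c div M + 1)"
    proof -
      have "c mod M < M" using Mpos by simp
      moreover have "c mod M \<le> c" by simp
      ultimately have "(M - c mod M) + c = M + (c - c mod M)" by arith
      also have "c - c mod M = M * (c div M)" by (simp add: minus_mod_eq_mult_div)
      finally show ?thesis by (simp add: algebra_simps)
    qed
    ultimately show ?thesis by (metis cong_dvd_iff dvd_triv_left)
  qed
  have NB: "N \<ge> B"
  proof -
    have fpos: "\<forall>t\<in>T. f t > 0" using tpos teq by (metis gr0I mult_0_right)
    have "H > 0" unfolding H_def using m1 fpos by (simp add: prod_pos)
    hence "1 \<le> H * M" using Mpos by (simp add: Suc_le_eq)
    hence "B * 1 \<le> B * (H * M)" by (rule mult_le_mono2)
    hence "B \<le> B * H * M" by (simp add: mult.assoc)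
    thus ?thesis unfolding N_def by (rule trans_le_add2)
  qed
  have main: "\<forall>t\<in>T. \<forall>t'\<in>T. t < t' \<longrightarrow> m1*(t'-t) dvd N + t \<and> m2*(t'-t) dvd N + t'"
  proof (intro ballI impI)
    fix t t' assume t: "t \<in> T" and t': "t' \<in> T" and lt: "t < t'"
    obtain g h where gh: "t' - t = m2^g * h" "coprime h m2" "m1*h dvd t" "h dvd t'" "[t' = c] (mod m2^Suc g)"
      using tpair[OF t t' lt] by blast
    have hpos: "h > 0" using gh(1) lt by (metis gr0I mult_0_right zero_less_diff)
    have ht: "h dvd t" using gh(3) by (meson dvd_mult_right)
    have "coprime h (m2^\<gamma>)" using gh(2) by simp
    hence "h dvd f t" using ht teq[OF t] by (metis coprime_dvd_mult_right_iff)
    hence m1hH: "m1 * h dvd H" unfolding H_def using fin t by (meson dvd_prodI mult_dvd_mono dvd_refl dvd_trans)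
    hence m1hN: "m1 * h dvd N" using HN by (rule dvd_trans)
    have MSg: "m2^Suc g dvd M"
    proof (cases "m2 = 1")
      case True thus ?thesis by simp
    next
      case False
      hence "m2 \<ge> 2" using m2 by simp
      have "Suc g \<le> E"
      proof -
        have "g < 2^g" by (rule less_exp)
        also have "\<dots> \<le> m2^g" using \<open>m2 \<ge> 2\<close> by (simp add: power_mono)
        also have "\<dots> \<le> m2^g * h" using hpos by simp
        also have "\<dots> = t' - t" using gh(1) by simp
        also have "\<dots> \<le> t'" by simp
        also have "\<dots> \<le> E" unfolding E_def by (simp add: sum.remove[OF fin t'])
        finally show ?thesis by simp
      qed
      thus ?thesis unfolding M_def by (rule le_imp_power_dvd)
    qed
    have cN: "m2^Suc g dvd N + c" using MSg MN by (rule dvd_trans)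
    have c1: "[N + t' = N + c] (mod m2^Suc g)" using gh(5) by (simp add: cong_add_lcancel_nat)
    have d1: "m2^Suc g dvd N + t'" using c1 cN by (metis cong_dvd_iff)
    have "[t' = c] (mod m2^g)" using gh(5) by (metis cong_dvd_modulus_nat le_imp_power_dvd le_SucI order_refl)
    moreover have "[t = t'] (mod m2^g)"
    proof -
      have "t' = t + m2^g * h" using gh(1) lt by simp
      thus ?thesis by (simp add: cong_def)
    qed
    ultimately have "[N + t = N + c] (mod m2^g)" by (metis cong_add_lcancel_nat cong_trans)
    moreover have "m2^g dvd N + c" using cN by (meson dvd_trans le_imp_power_dvd le_SucI order_refl)
    ultimately have d2: "m2^g dvd N + t" by (metis cong_dvd_iff)
    have A: "m1*(t'-t) dvd N + t"
    proof -
      have "coprime (m1*h) (m2^g)" using cop gh(2) by simp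
      moreover have "m1 * h dvd N + t" using m1hN gh(3) by simp
      ultimately have "m1 * h * m2^g dvd N + t" using d2 by (simp add: divides_mult)
      thus ?thesis using gh(1) by (simp add: ac_simps)
    qed
    have B: "m2*(t'-t) dvd N + t'"
    proof -
      have "coprime h (m2^Suc g)" using gh(2) by simp
      moreover have "h dvd N + t'" using m1hN gh(4) by (meson dvd_add dvd_mult_right)
      ultimately have "h * m2^Suc g dvd N + t'" using d1 by (simp add: divides_mult)
      thus ?thesis using gh(1) by (simp add: ac_simps)
    qed
    show "m1*(t'-t) dvd N + t \<and> m2*(t'-t) dvd N + t'" using A B by simp
  qed
  show ?thesis using NB main by blast
qed



lemma edge:
  fixes a x y m1 m2 :: nat and b d :: int
  assumes a: "a \<ge> 1" and cop: "coprime m1 m2" and m1b: "int m1 dvd b" and m2d: "int m2 dvd d"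
    and am: "a dvd m1*m2" and bd: "b < d" and x: "0 < x" and xy: "x < y"
    and d1: "m1*(y-x) dvd x" and d2: "m2*(y-x) dvd y" and big: "(a + nat\<bar>b\<bar>)*(y-x) \<le> x"
  shows "(of_nat x / of_nat y :: rat) \<in> R_set a b a d"
proof -
  define \<delta> where "\<delta> = y - x"
  have \<delta>pos: "\<delta> > 0" using xy unfolding \<delta>_def by simp
  obtain k where k: "x = m1 * \<delta> * k" using d1 unfolding \<delta>_def by (auto elim: dvdE)
  define u where "u = m1 * k"
  have xu: "x = \<delta> * u" using k unfolding u_def by simp
  have "y = x + \<delta>" using xy unfolding \<delta>_def by simp
  hence yu: "y = \<delta> * (u + 1)" using xu by (simp add: distrib_left)
  obtain l where l: "y = m2 * \<delta> * l" using d2 unfolding \<delta>_def by (auto elim: dvdE)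
  have "\<delta> * (u + 1) = \<delta> * (m2 * l)" using yu l by (simp add: ac_simps)
  hence ul: "u + 1 = m2 * l" by (metis \<delta>pos mult_left_cancel neq0_conv)
  define U where "U = int u"
  define K where "K = U * (d - b) - b"
  have K2: "K = U * d - (U + 1) * b" unfolding K_def by (simp add: algebra_simps)
  have "int m1 dvd U" unfolding U_def u_def by simp
  hence "int m1 dvd K" unfolding K_def using m1b by simp
  moreover have "int m2 dvd K"
  proof -
    have "U + 1 = int m2 * int l" unfolding U_def using ul by (metis of_nat_1 of_nat_add of_nat_mult)
    thus ?thesis unfolding K2 using m2d by simp
  qed
  moreover have "coprime (int m1) (int m2)" using cop by simp
  ultimately have "int m1 * int m2 dvd K" by (simp add: divides_mult)
  hence aK: "int a dvd K" using am by (metis dvd_trans of_nat_dvd_iff of_nat_mult)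
  have "\<delta> * (a + nat\<bar>b\<bar>) \<le> \<delta> * u" using big xu unfolding \<delta>_def by (simp add: mult.commute)
  hence ub: "a + nat\<bar>b\<bar> \<le> u" using \<delta>pos by (meson mult_le_cancel1 neq0_conv)
  hence Ub: "int a + \<bar>b\<bar> \<le> U" unfolding U_def by simp
  have "0 \<le> U" unfolding U_def by simp
  moreover have "1 \<le> d - b" using bd by simp
  ultimately have "U * 1 \<le> U * (d - b)" by (intro mult_left_mono)
  hence "U \<le> U * (d - b)" by simp
  hence Kge: "K \<ge> int a" unfolding K_def using Ub by linarith
  obtain n0 where n0: "K = int a * n0" using aK by (auto elim: dvdE)
  have "n0 \<ge> 1"
  proof (rule ccontr)
    assume "\<not> n0 \<ge> 1"
    hence "n0 \<le> 0" by simp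
    hence "int a * n0 \<le> 0" using a by (simp add: mult_nonneg_nonpos)
    thus False using Kge n0 a by simp
  qed
  define n where "n = nat n0"
  have nn: "int n = n0" using \<open>n0 \<ge> 1\<close> unfolding n_def by simp
  have e1: "int a * int n + b = U * (d - b)" using n0 nn unfolding K_def by simp
  have e2: "int a * int n + d = (U + 1) * (d - b)" using e1 by (simp add: algebra_simps)
  have Upos: "U > 0" using Ub a by simp
  have db: "d - b > 0" using bd by simp
  have q: "(of_nat x / of_nat y :: rat) = of_int (int a * int n + b) / of_int (int a * int n + d)"
  proof -
    have "(of_nat x / of_nat y :: rat) = (of_nat \<delta> * of_nat u) / (of_nat \<delta> * of_nat (u + 1))"
      using xu yu by (simp only: of_nat_mult)
    also have "\<dots> = of_nat u / of_nat (u + 1)"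
      using \<delta>pos by (rule_tac mult_divide_mult_cancel_left) simp
    also have "\<dots> = (of_int U * of_int (d - b)) / (of_int (U + 1) * of_int (d - b))"
      using db unfolding U_def by simp
    also have "\<dots> = of_int (int a * int n + b) / of_int (int a * int n + d)"
      unfolding e1 e2 by simp
    finally show ?thesis .
  qed
  have pos: "(of_nat x / of_nat y :: rat) > 0" using x xy by simp
  have ne1: "(of_nat x / of_nat y :: rat) \<noteq> 1" using xy by simp
  have "n \<ge> 1" using \<open>n0 \<ge> 1\<close> unfolding n_def by simp
  thus ?thesis unfolding R_set_def using q pos ne1 by blast
qed

lemma R_set_swap:
  assumes "q \<in> R_set a d a b"
  shows "inverse q \<in> R_set a b a d"
proof -
  obtain n where n: "n \<ge> 1" "q = of_int (int a * int n + d) / of_int (int a * int n + b)" "q > 0" "q \<noteq> 1"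
    using assms unfolding R_set_def by blast
  have "inverse q = of_int (int a * int n + b) / of_int (int a * int n + d)" using n(2) by simp
  moreover have "inverse q > 0" using n(3) by simp
  moreover have "inverse q \<noteq> 1" using n(4) by (metis inverse_1 inverse_inverse_eq)
  ultimately show ?thesis unfolding R_set_def using n(1) by blast
qed


lemma core:
  fixes a m1 m2 :: nat and b d :: int
  assumes a: "a \<ge> 1" and m1: "m1 > 0" and m2: "m2 > 0" and cop: "coprime m1 m2"
    and m1b: "int m1 dvd b" and m2d: "int m2 dvd d" and am: "a dvd m1*m2" and bd: "b < d"
  shows "\<exists>S. finite S \<and> card S = Suc j \<and> (\<forall>m\<in>S. m \<ge> 1) \<and>
           (\<forall>x\<in>S. \<forall>y\<in>S. x < y \<longrightarrow> (of_nat x / of_nat y :: rat) \<in> R_set a b a d)"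
proof -
  obtain T c where I: "Inv m1 m2 T 0 c" and cT: "card T = Suc j"
    using Inv_exists[OF cop m1 m2] by blast
  have fin: "finite T" using I unfolding Inv_def by auto
  have tpos: "\<And>t. t \<in> T \<Longrightarrow> 0 < t" using I unfolding Inv_def by auto
  define A where "A = a + nat\<bar>b\<bar>"
  obtain N where NB: "N \<ge> A * (\<Sum>t\<in>T. t)" and
    Nd: "\<forall>t\<in>T. \<forall>t'\<in>T. t < t' \<longrightarrow> m1*(t'-t) dvd N + t \<and> m2*(t'-t) dvd N + t'"
    using Inv_N[OF cop m1 m2 I] by blast
  define S where "S = (+) N ` T"
  have "finite S" unfolding S_def using fin by simp
  moreover have "card S = Suc j" unfolding S_def using cT by (simp add: card_image)
  moreover have "\<forall>m\<in>S. m \<ge> 1" unfolding S_def using tpos by fastforce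
  moreover have "\<forall>x\<in>S. \<forall>y\<in>S. x < y \<longrightarrow> (of_nat x / of_nat y :: rat) \<in> R_set a b a d"
  proof (intro ballI impI)
    fix x y assume xS: "x \<in> S" and yS: "y \<in> S" and xy: "x < y"
    obtain t where t: "t \<in> T" "x = N + t" using xS unfolding S_def by blast
    obtain t' where t': "t' \<in> T" "y = N + t'" using yS unfolding S_def by blast
    have tt: "t < t'" using xy t t' by simp
    have dif: "y - x = t' - t" using t t' by simp
    have dv: "m1*(y-x) dvd x" "m2*(y-x) dvd y" using Nd t t' tt dif by auto
    have "t' - t \<le> (\<Sum>t\<in>T. t)" using sum.remove[OF fin t'(1), of "\<lambda>t. t"] by simp
    hence "A * (t' - t) \<le> A * (\<Sum>t\<in>T. t)" by (rule mult_le_mono2)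
    also have "\<dots> \<le> x" using NB t by simp
    finally have big: "(a + nat\<bar>b\<bar>)*(y-x) \<le> x" using dif unfolding A_def by simp
    have "0 < x" using t tpos by simp
    show "(of_nat x / of_nat y :: rat) \<in> R_set a b a d"
      by (rule edge[OF a cop m1b m2d am bd \<open>0 < x\<close> xy dv big])
  qed
  ultimately show ?thesis by blast
qed

theorem theorem3p2:
  fixes a :: nat and b d :: int
  assumes "a \<ge> 1" and "b \<noteq> d" and "int a dvd lcm b d"
  shows "\<forall>k::nat. \<exists>S. finite S \<and> card S = k \<and> is_clique a b a d S"
proof
  fix k :: nat
  show "\<exists>S. finite S \<and> card S = k \<and> is_clique a b a d S"
  proof (cases k)
    case 0
    thus ?thesis by (intro exI[of _ "{}"]) (simp add: is_clique_def)
  next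
    case (Suc j)
    have "lcm b d = int (lcm (nat\<bar>b\<bar>) (nat\<bar>d\<bar>))" by (simp only: lcm_int_def)
    hence al: "a dvd lcm (nat\<bar>b\<bar>) (nat\<bar>d\<bar>)" using assms(3) by (metis of_nat_dvd_iff)
    have apos: "a > 0" using assms(1) by simp
    show ?thesis
    proof (cases "b < d")
      case True
      obtain m1 m2 where mm: "m1 > 0" "m2 > 0" "coprime m1 m2" "m1 dvd nat\<bar>b\<bar>" "m2 dvd nat\<bar>d\<bar>" "a dvd m1*m2"
        using coprime_split[OF apos al] by blast
      have m1b: "int m1 dvd b" and m2d: "int m2 dvd d" using mm(4,5) by (simp_all only: dvd_nat_abs_iff)
      obtain S where S: "finite S" "card S = Suc j" "\<forall>m\<in>S. m \<ge> 1"
        "\<forall>x\<in>S. \<forall>y\<in>S. x < y \<longrightarrow> (of_nat x / of_nat y :: rat) \<in> R_set a b a d"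
        using core[OF assms(1) mm(1,2,3) m1b m2d mm(6) True] by blast
      have "is_clique a b a d S" unfolding is_clique_def
      proof (intro conjI)
        show "\<forall>m\<in>S. 1 \<le> m" using S(3) by blast
        show "\<forall>m\<in>S. \<forall>n\<in>S. m \<noteq> n \<longrightarrow> G_adj a b a d m n"
        proof (intro ballI impI)
          fix m n assume mS: "m \<in> S" and nS: "n \<in> S" and mn: "m \<noteq> n"
          have "1 \<le> m" "1 \<le> n" using S(3) mS nS by auto
          moreover have "(of_nat m / of_nat n :: rat) \<in> R_set a b a d \<or> (of_nat n / of_nat m :: rat) \<in> R_set a b a d"
          proof (cases "m < n")
            case True thus ?thesis using S(4) mS nS by blast
          next
            case False hence "n < m" using mn by simp
            thus ?thesis using S(4) mS nS by blast
          qed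
          ultimately show "G_adj a b a d m n" unfolding G_adj_def by blast
        qed
      qed
      thus ?thesis using S Suc by blast
    next
      case False
      hence db: "d < b" using assms(2) by simp
      have al': "a dvd lcm (nat\<bar>d\<bar>) (nat\<bar>b\<bar>)" using al by (simp add: lcm.commute)
      obtain m1 m2 where mm: "m1 > 0" "m2 > 0" "coprime m1 m2" "m1 dvd nat\<bar>d\<bar>" "m2 dvd nat\<bar>b\<bar>" "a dvd m1*m2"
        using coprime_split[OF apos al'] by blast
      have m1d: "int m1 dvd d" and m2b: "int m2 dvd b" using mm(4,5) by (simp_all only: dvd_nat_abs_iff)
      obtain S where S: "finite S" "card S = Suc j" "\<forall>m\<in>S. m \<ge> 1"
        "\<forall>x\<in>S. \<forall>y\<in>S. x < y \<longrightarrow> (of_nat x / of_nat y :: rat) \<in> R_set a d a b"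
        using core[OF assms(1) mm(1,2,3) m1d m2b mm(6) db] by blast
      have S': "\<forall>x\<in>S. \<forall>y\<in>S. x < y \<longrightarrow> (of_nat y / of_nat x :: rat) \<in> R_set a b a d"
      proof (intro ballI impI)
        fix x y assume "x \<in> S" "y \<in> S" "x < y"
        hence "inverse (of_nat x / of_nat y :: rat) \<in> R_set a b a d" using S(4) R_set_swap by blast
        thus "(of_nat y / of_nat x :: rat) \<in> R_set a b a d" by simp
      qed
      have "is_clique a b a d S" unfolding is_clique_def
      proof (intro conjI)
        show "\<forall>m\<in>S. 1 \<le> m" using S(3) by blast
        show "\<forall>m\<in>S. \<forall>n\<in>S. m \<noteq> n \<longrightarrow> G_adj a b a d m n"
        proof (intro ballI impI)
          fix m n assume mS: "m \<in> S" and nS: "n \<in> S" and mn: "m \<noteq> n"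
          have "1 \<le> m" "1 \<le> n" using S(3) mS nS by auto
          moreover have "(of_nat m / of_nat n :: rat) \<in> R_set a b a d \<or> (of_nat n / of_nat m :: rat) \<in> R_set a b a d"
          proof (cases "m < n")
            case True thus ?thesis using S' mS nS by blast
          next
            case False hence "n < m" using mn by simp
            thus ?thesis using S' mS nS by blast
          qed
          ultimately show "G_adj a b a d m n" unfolding G_adj_def by blast
        qed
      qed
      thus ?thesis using S Suc by blast
    qed
  qed
qed

end
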